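(* For every integer $n\ge 1$, \[ \mathrm{Od}(n!)=(-1)^{D(n)+\nu(\lfloor n/4\rfloor)}. \]
   Context: For $n\ge 1$ write $n=2^{v}o$ with $o$ odd; $\mathrm{Od}(n):=1$ if $o\equiv 1\pmod 4$ and $\mathrm{Od}(n):=-1$ if $o\equiv 3\pmod 4$. If $n$ has binary expansion $n=\sum_{i\ge0}b_i2^i$ ($b_i\in\{0,1\}$), then $\nu(n):=\sum_i b_i$ (with $\nu(0)=0$), and $D(n)$ is the number of indices $i$ with $b_ib_{i+1}=1$ (the number of, possibly overlapping, pairs of adjacent $1$s). *)

theory Defs
  imports Main "HOL-Computational_Algebra.Primes"
begin

definition odd_part :: "nat \<Rightarrow> nat" where
  "odd_part n = n div 2 ^ multiplicity (2::nat) n"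

definition Od :: "nat \<Rightarrow> int" where
  "Od n = (if odd_part n mod 4 = 1 then 1 else -1)"

definition bit_at :: "nat \<Rightarrow> nat \<Rightarrow> nat" where
  "bit_at n i = n div 2 ^ i mod 2"

text \<open>Binary digit sum (all digits at positions >= n vanish since n < 2^n).\<close>
definition nu :: "nat \<Rightarrow> nat" where
  "nu n = (\<Sum>i<n. bit_at n i)"

definition D :: "nat \<Rightarrow> nat" where
  "D n = card {i. bit_at n i = 1 \<and> bit_at n (Suc i) = 1}"

end

theory Submission
  imports Defs
begin

lemma odd_part_eq:
  assumes "odd (q::nat)"
  shows "odd_part (2^k * q) = q"
proof -
  have "q \<noteq> 0" using odd_pos[OF assms] by simp
  have "multiplicity (2::nat) (2^k * q) = multiplicity (2::nat) (2^k) + multiplicity 2 q"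
    by (rule prime_elem_multiplicity_mult_distrib) (use \<open>q \<noteq> 0\<close> in auto)
  also have "\<dots> = k" using assms by (simp add: not_dvd_imp_multiplicity_0)
  finally show ?thesis unfolding odd_part_def by simp
qed

lemma decomp2:
  assumes "(n::nat) > 0"
  obtains k q where "odd q" "n = 2^k * q"
proof -
  obtain y where "n = 2 ^ multiplicity 2 n * y" "\<not> (2::nat) dvd y"
    by (rule multiplicity_decompose'[where p=2 and x=n]) (use assms in auto)
  moreover have "odd y" using \<open>\<not> (2::nat) dvd y\<close> by simp
  ultimately show ?thesis using that[of y "multiplicity 2 n"] by blast
qed

lemma Od_odd: "odd (q::nat) \<Longrightarrow> Od (2^k * q) = (if q mod 4 = 1 then 1 else -1)"
  by (simp add: Od_def odd_part_eq)

lemma odd_mod4: "odd (q::nat) \<Longrightarrow> q mod 4 = 1 \<or> q mod 4 = 3"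
  by presburger

lemma Od_mult:
  assumes "a > 0" "b > 0"
  shows "Od (a * b) = Od a * Od b"
proof -
  obtain i q1 where q1: "odd q1" "a = 2^i * q1" using decomp2 assms(1) by blast
  obtain j q2 where q2: "odd q2" "b = 2^j * q2" using decomp2 assms(2) by blast
  have ab: "a * b = 2^(i+j) * (q1*q2)" using q1 q2 by (simp add: power_add)
  have "odd (q1*q2)" using q1 q2 by simp
  have m: "(q1*q2) mod 4 = ((q1 mod 4) * (q2 mod 4)) mod 4" by (simp add: mod_mult_eq)
  have A: "Od (a*b) = (if (q1*q2) mod 4 = 1 then 1 else -1)"
    unfolding ab by (rule Od_odd) fact
  have B: "Od a = (if q1 mod 4 = 1 then 1 else -1)" unfolding q1(2) by (rule Od_odd) fact
  have C: "Od b = (if q2 mod 4 = 1 then 1 else -1)" unfolding q2(2) by (rule Od_odd) fact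
  show ?thesis unfolding A B C m
    using odd_mod4[OF q1(1)] odd_mod4[OF q2(1)] by (elim disjE) simp_all
qed

lemma Od_double: "m > 0 \<Longrightarrow> Od (2 * m) = Od m"
  using Od_mult[of 2 m] by (simp add: Od_odd[of 1 1, simplified])

lemma Od_oddnum: "Od (2 * m + 1) = (if odd m then -1 else 1)"
proof -
  have "Od (2^0 * (2*m+1)) = (if (2*m+1) mod 4 = 1 then 1 else -1)"
    by (rule Od_odd) simp
  moreover have "((2*m+1) mod 4 = 1) = even m" by presburger
  ultimately show ?thesis by simp
qed

fun P :: "nat \<Rightarrow> int" where
  "P 0 = 1"
| "P (Suc n) = P n * Od (Suc n)"

lemma Od_fact: "Od (fact n) = P n"
proof (induction n)
  case 0 then show ?case by (simp add: Od_odd[of 1 0, simplified])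
next
  case (Suc n)
  have "Od (fact (Suc n)) = Od (Suc n * fact n)" by (simp add: fact_Suc)
  also have "\<dots> = Od (Suc n) * Od (fact n)" by (rule Od_mult) auto
  finally show ?case using Suc by simp
qed

lemma P_double: "P (2 * m) = (-1) ^ (m div 2) * P m"
proof (induction m)
  case 0 then show ?case by simp
next
  case (Suc m)
  have e: "2 * Suc m = Suc (Suc (2*m))" by simp
  have o: "Od (Suc (Suc (2*m))) = Od (Suc m)" by (metis e Od_double zero_less_Suc)
  have "P (2 * Suc m) = P (Suc (Suc (2*m)))" using e by simp
  also have "\<dots> = P (2*m) * Od (Suc (2*m)) * Od (Suc (Suc (2*m)))" by simp
  also have "\<dots> = (-1) ^ (m div 2) * P m * Od (Suc (2*m)) * Od (Suc m)"
    by (simp only: Suc.IH o)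
  finally have 1: "P (2 * Suc m) = (-1) ^ (m div 2) * P m * Od (2*m+1) * Od (Suc m)"
    by simp
  show ?case
  proof (cases "even m")
    case True
    then have "Suc m div 2 = m div 2" by presburger
    moreover have "Od (2*m+1) = 1" using Od_oddnum[of m] True by simp
    ultimately show ?thesis unfolding 1 by simp
  next
    case False
    then have "Suc m div 2 = Suc (m div 2)" by presburger
    moreover have "Od (2*m+1) = -1" using Od_oddnum[of m] False by simp
    ultimately show ?thesis unfolding 1 by simp
  qed
qed

lemma bit_Suc: "bit_at n (Suc i) = bit_at (n div 2) i"
  by (simp add: bit_at_def div_mult2_eq)

lemma bit_zero: "i \<ge> n \<Longrightarrow> bit_at n i = 0"
proof -
  assume "i \<ge> n"
  have "n < 2^n" by simp
  also have "\<dots> \<le> 2^i" using \<open>i \<ge> n\<close> by simp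
  finally show ?thesis by (simp add: bit_at_def)
qed

lemma nu_ext: "N \<ge> n \<Longrightarrow> nu n = (\<Sum>i<N. bit_at n i)"
proof -
  assume "N \<ge> n"
  have "(\<Sum>i<N. bit_at n i) = (\<Sum>i<n. bit_at n i) + (\<Sum>i\<in>{n..<N}. bit_at n i)"
    using \<open>N \<ge> n\<close> by (metis atLeast0LessThan sum.atLeastLessThan_concat zero_le)
  also have "(\<Sum>i\<in>{n..<N}. bit_at n i) = 0" by (simp add: bit_zero)
  finally show ?thesis by (simp add: nu_def)
qed

lemma nu_rec: "nu k = k mod 2 + nu (k div 2)"
proof -
  have "nu k = (\<Sum>i<Suc k. bit_at k i)" by (rule nu_ext) simp
  also have "\<dots> = bit_at k 0 + (\<Sum>i<k. bit_at k (Suc i))"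
    by (rule sum.lessThan_Suc_shift)
  also have "(\<Sum>i<k. bit_at k (Suc i)) = nu (k div 2)"
    using nu_ext[of "k div 2" k] by (simp add: bit_Suc)
  finally show ?thesis by (simp add: bit_at_def)
qed

definition S :: "nat \<Rightarrow> nat set" where
  "S n = {i. bit_at n i = 1 \<and> bit_at n (Suc i) = 1}"

lemma S_fin: "finite (S n)"
proof -
  have "S n \<subseteq> {..<n}"
  proof
    fix i assume "i \<in> S n"
    then have "bit_at n i = 1" by (simp add: S_def)
    then show "i \<in> {..<n}" using bit_zero[of n i] by (cases "i < n") auto
  qed
  thus ?thesis by (rule finite_subset) simp
qed

lemma S_rec: "S n = (if bit_at n 0 = 1 \<and> bit_at (n div 2) 0 = 1 then {0} else {}) \<union> Suc ` S (n div 2)"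
proof (intro equalityI subsetI)
  fix i assume "i \<in> S n"
  then show "i \<in> (if bit_at n 0 = 1 \<and> bit_at (n div 2) 0 = 1 then {0} else {}) \<union> Suc ` S (n div 2)"
  proof (cases i)
    case 0 then show ?thesis using \<open>i \<in> S n\<close> by (simp add: S_def bit_Suc)
  next
    case (Suc j)
    then have "j \<in> S (n div 2)" using \<open>i \<in> S n\<close> by (simp add: S_def bit_Suc)
    then show ?thesis using Suc by blast
  qed
next
  fix i assume i: "i \<in> (if bit_at n 0 = 1 \<and> bit_at (n div 2) 0 = 1 then {0} else {}) \<union> Suc ` S (n div 2)"
  show "i \<in> S n"
  proof (cases "i \<in> Suc ` S (n div 2)")
    case True
    then obtain j where "i = Suc j" "j \<in> S (n div 2)" by blast
    then show ?thesis by (simp add: S_def bit_Suc)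
  next
    case False
    then have "i = 0" "bit_at n 0 = 1" "bit_at (n div 2) 0 = 1" using i by (auto split: if_splits)
    then show ?thesis by (simp add: S_def bit_Suc)
  qed
qed

lemma D_rec: "D n = (if odd n \<and> odd (n div 2) then 1 else 0) + D (n div 2)"
proof -
  have D: "D m = card (S m)" for m by (simp add: D_def S_def)
  have c: "card (Suc ` S (n div 2)) = card (S (n div 2))" by (simp add: card_image)
  have b: "(bit_at n 0 = 1) = odd n" "(bit_at (n div 2) 0 = 1) = odd (n div 2)"
    by (auto simp: bit_at_def odd_iff_mod_2_eq_one)
  have f: "finite (Suc ` S (n div 2))" using S_fin by blast
  have z: "0 \<notin> Suc ` S (n div 2)" by blast
  show ?thesis
  proof (cases "odd n \<and> odd (n div 2)")
    case True
    then have ns: "bit_at n 0 = 1 \<and> bit_at (n div 2) 0 = 1" using b by simp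
    have "S n = insert 0 (Suc ` S (n div 2))" using S_rec[of n]
      by (simp only: ns if_True simp_thms insert_is_Un[symmetric])
    then show ?thesis using True D c card_insert_disjoint[OF f z] by simp
  next
    case False
    then have ns: "\<not> (bit_at n 0 = 1 \<and> bit_at (n div 2) 0 = 1)" using b by simp
    have "S n = Suc ` S (n div 2)" using S_rec[of n]
      by (simp only: ns if_False Un_empty_left)
    then show ?thesis using False D c by simp
  qed
qed

lemma neg1_eq: "even ((a::nat) + b) \<Longrightarrow> (-1::int) ^ a = (-1) ^ b"
  by (metis (no_types, lifting) even_add neg_one_even_power neg_one_odd_power)

lemma par_lemma: "even ((m div 2 + x + y + (if odd (n::nat) then m mod 2 else 0)) +
        ((if odd n \<and> odd m then 1 else 0) + x + (((m::nat) div 2) mod 2 + y)))"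
  by presburger

lemma main: "P n = (-1) ^ (D n + nu (n div 4))"
proof (induction n rule: less_induct)
  case (less n)
  show ?case
  proof (cases "n = 0")
    case True
    have "D 0 = 0" by (simp add: D_def bit_at_def)
    moreover have "nu 0 = 0" by (simp add: nu_def)
    ultimately show ?thesis using True by simp
  next
    case False
    define m where "m = n div 2"
    have mn: "m < n" using False by (simp add: m_def)
    have IH: "P m = (-1) ^ (D m + nu (m div 4))" using less mn by blast
    have Dn: "D n = (if odd n \<and> odd m then 1 else 0) + D m" using D_rec[of n] by (simp add: m_def)
    have n4: "n div 4 = m div 2" by (simp add: m_def div_mult2_eq[symmetric])
    have nuk: "nu (m div 2) = (m div 2) mod 2 + nu (m div 4)"
    proof -
      have "m div 2 div 2 = m div 4" by (simp add: div_mult2_eq)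
      then show ?thesis using nu_rec[of "m div 2"] by simp
    qed
    have Pn: "P n = (-1) ^ (m div 2) * P m * (if odd n then (-1) ^ (m mod 2) else 1)"
    proof (cases "even n")
      case True
      then have "n = 2*m" by (simp add: m_def)
      then have "P n = (-1) ^ (m div 2) * P m" using P_double[of m] by simp
      then show ?thesis using True by simp
    next
      case F: False
      then have "n = Suc (2*m)" by (simp add: m_def)
      moreover have "Od (Suc (2*m)) = (-1) ^ (m mod 2)"
        using Od_oddnum[of m] by (cases "even m") (auto simp: odd_iff_mod_2_eq_one)
      ultimately have "P n = P (2*m) * (-1) ^ (m mod 2)" by simp
      then show ?thesis using P_double[of m] F by simp
    qed
    have Pn2: "P n = (-1) ^ (m div 2 + D m + nu (m div 4) + (if odd n then m mod 2 else 0))"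
      unfolding Pn IH by (simp add: power_add)
    have par: "even ((m div 2 + D m + nu (m div 4) + (if odd n then m mod 2 else 0)) +
        ((if odd n \<and> odd m then 1 else 0) + D m + ((m div 2) mod 2 + nu (m div 4))))"
      by (rule par_lemma)
    have "(-1::int) ^ (m div 2 + D m + nu (m div 4) + (if odd n then m mod 2 else 0)) =
          (-1) ^ ((if odd n \<and> odd m then 1 else 0) + D m + ((m div 2) mod 2 + nu (m div 4)))"
      by (rule neg1_eq[OF par])
    then show ?thesis unfolding Pn2 Dn n4 nuk .
  qed
qed

theorem lemma3p1:
  fixes n :: nat
  assumes "n \<ge> 1"
  shows "Od (fact n) = (-1) ^ (D n + nu (n div 4))"
  using Od_fact main by simp

end
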